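(* Let $\mathbf{A}$ be a 5-dimensional LV algebra with natural basis $e_1,\dots,e_5$ such that $e_4e_j=\frac12(e_4+e_j)$ for $j=1,2,3,5$, and $e_ie_j\neq\frac12(e_i+e_j)$ for all distinct $i,j\in\{1,2,3,5\}$. Then $\mathrm{Der}(\mathbf{A})=\{0\}$.
   Context: Let $\mathbb{F}$ be a field of characteristic different from $2$. A Lotka–Volterra (LV) algebra of dimension $5$ over $\mathbb{F}$ is a commutative (not necessarily associative) $\mathbb{F}$-algebra $\mathbf{A}$ with a basis $e_1,\dots,e_5$ (the natural basis) such that $e_ie_j=\alpha_{ij}e_i+\alpha_{ji}e_j$ with $\alpha_{ij}\in\mathbb{F}$, $\alpha_{ii}=\frac12$ and $\alpha_{ij}+\alpha_{ji}=1$ for all $i,j$. A derivation is a linear map $D:\mathbf{A}\to\mathbf{A}$ with $D(uv)=D(u)v+uD(v)$ for all $u,v$; $\mathrm{Der}(\mathbf{A})$ is the set of derivations. *)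

theory Defs
  imports "HOL-Analysis.Finite_Cartesian_Product"
begin

datatype idx5 = I1 | I2 | I3 | I4 | I5

lemma UNIV_idx5: "(UNIV :: idx5 set) = {I1, I2, I3, I4, I5}"
  using idx5.exhaust by auto

instance idx5 :: finite
  by standard (simp add: UNIV_idx5)

text \<open>Elements of the algebra are coordinate vectors 'a^idx5 w.r.t. the natural basis;
  the basis vector e_i is axis i 1.  The product is the bilinear extension of
  e_i e_j = alpha i j e_i + alpha j i e_j.\<close>
definition lv_mult :: "(idx5 \<Rightarrow> idx5 \<Rightarrow> 'a::field) \<Rightarrow> 'a^idx5 \<Rightarrow> 'a^idx5 \<Rightarrow> 'a^idx5" where
  "lv_mult \<alpha> u v = (\<chi> k. \<Sum>j\<in>UNIV. \<alpha> k j * (u$k * v$j + u$j * v$k))"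

definition is_LV :: "(idx5 \<Rightarrow> idx5 \<Rightarrow> 'a::field) \<Rightarrow> bool" where
  "is_LV \<alpha> \<longleftrightarrow> (\<forall>i. \<alpha> i i = 1/2) \<and> (\<forall>i j. \<alpha> i j + \<alpha> j i = 1)"

definition is_derivation :: "(idx5 \<Rightarrow> idx5 \<Rightarrow> 'a::field) \<Rightarrow> ('a^idx5 \<Rightarrow> 'a^idx5) \<Rightarrow> bool" where
  "is_derivation \<alpha> D \<longleftrightarrow>
     (\<forall>u v. D (u + v) = D u + D v) \<and> (\<forall>c u. D (c *s u) = c *s D u) \<and>
     (\<forall>u v. D (lv_mult \<alpha> u v) = lv_mult \<alpha> (D u) v + lv_mult \<alpha> u (D v))"

end

theory Submission
  imports Defs
begin

lemma mult_axis:
  "lv_mult \<alpha> (axis i 1) w $ k =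
     (if k = i then (\<Sum>j\<in>UNIV. \<alpha> i j * w$j) + \<alpha> i i * w$i else \<alpha> k i * w$k)"
proof (cases "k = i")
  case True
  have "lv_mult \<alpha> (axis i 1) w $ k = (\<Sum>j\<in>UNIV. \<alpha> i j * w$j + (if j = i then \<alpha> i i * w$i else 0))"
    using True by (simp add: lv_mult_def, intro sum.cong) (auto simp: axis_def algebra_simps)
  also have "\<dots> = (\<Sum>j\<in>UNIV. \<alpha> i j * w$j) + \<alpha> i i * w$i"
    by (simp add: sum.distrib)
  finally show ?thesis using True by simp
next
  case False
  have "lv_mult \<alpha> (axis i 1) w $ k = (\<Sum>j\<in>UNIV. (if j = i then \<alpha> k i * w$k else 0))"
    using False unfolding lv_mult_def vec_lambda_beta by (intro sum.cong) (auto simp: axis_def)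
  also have "\<dots> = \<alpha> k i * w$k" by simp
  finally show ?thesis using False by simp
qed
lemma sum5: "(\<Sum>j\<in>UNIV. f j) = f I1 + f I2 + f I3 + f I4 + f I5"
  by (simp add: UNIV_idx5 add.assoc)
lemma axis_comp: "axis j 1 $ l = (if l = j then 1 else 0)" by (simp add: axis_def)
lemma sum_axis: "(\<Sum>l\<in>UNIV. (\<alpha>::idx5\<Rightarrow>idx5\<Rightarrow>'a::field) i l * (axis (j::idx5) 1 $ l)) = \<alpha> i j"
  by (cases j) (simp_all add: axis_comp sum5)
lemma prod: "\<And>i j. i \<noteq> j \<Longrightarrow> lv_mult \<alpha> (axis i 1) (axis j 1) = \<alpha> i j *s axis i 1 + \<alpha> j i *s axis j 1"
    unfolding vec_eq_iff mult_axis sum_axis by (auto simp: axis_comp)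

lemma mult_comm: "lv_mult \<alpha> u v = lv_mult \<alpha> v u"
  unfolding lv_mult_def by (simp add: vec_eq_iff algebra_simps)

lemma zero_mult: "lv_mult \<alpha> 0 v = 0"
  unfolding lv_mult_def by (simp add: vec_eq_iff)

lemma mult_zero: "lv_mult \<alpha> v 0 = 0"
  unfolding lv_mult_def by (simp add: vec_eq_iff)

lemma solve1: "(2::'a::field) \<noteq> 0 \<Longrightarrow> a \<noteq> 1/2 \<Longrightarrow> x = 2*(a*x) \<Longrightarrow> x = (0::'a)"
proof (rule ccontr)
  assume "(2::'a) \<noteq> 0" "a \<noteq> 1/2" "x = 2*(a*x)" "x \<noteq> 0"
  then have "1 = 2 * a" by (metis mult.assoc mult.commute mult_cancel_left1)
  then show False using \<open>a \<noteq> 1/2\<close> \<open>(2::'a) \<noteq> 0\<close> by (simp add: field_simps)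
qed

lemma solve2: "(2::'a::field) \<noteq> 0 \<Longrightarrow> a \<noteq> 1/2 \<Longrightarrow> (1/2)*x = a*x \<Longrightarrow> x = (0::'a)"
  by (metis mult_cancel_right)

lemma sum_two: "j \<noteq> I4 \<Longrightarrow> (\<And>l. l \<noteq> j \<Longrightarrow> l \<noteq> I4 \<Longrightarrow> w$l = 0) \<Longrightarrow>
   (\<Sum>l\<in>UNIV. (\<beta> l::'a::field) * w$l) = \<beta> j * w$j + \<beta> I4 * w$I4"
  by (cases j) (simp_all add: sum5)

lemma lin: "(c::'a::comm_ring) = a*(-y) + h*y + c \<Longrightarrow> h*y = a*y"
  by (simp add: algebra_simps)

theorem mainTheorem16:
  fixes \<alpha> :: "idx5 \<Rightarrow> idx5 \<Rightarrow> 'a::field"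
  assumes char: "(2::'a) \<noteq> 0"
    and LV: "is_LV \<alpha>"
    and e4: "\<And>j. j \<noteq> I4 \<Longrightarrow>
               lv_mult \<alpha> (axis I4 1) (axis j 1) = (1/2) *s (axis I4 1 + axis j 1)"
    and others: "\<And>i j. i \<noteq> I4 \<Longrightarrow> j \<noteq> I4 \<Longrightarrow> i \<noteq> j \<Longrightarrow>
               lv_mult \<alpha> (axis i 1) (axis j 1) \<noteq> (1/2) *s (axis i 1 + axis j 1)"
  shows "{D. is_derivation \<alpha> D} = {(\<lambda>u. 0)}"
proof -
  have aii: "\<And>i. \<alpha> i i = 1/2" and asym: "\<And>i j. \<alpha> j i = 1 - \<alpha> i j"
    using LV unfolding is_LV_def by (auto simp: eq_diff_eq add.commute)
  have prod_self: "\<And>i. lv_mult \<alpha> (axis i 1) (axis i 1) = axis i 1"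
  proof -
    fix i
    have "(1::'a)/2 + 1/2 = 1" using char by (simp add: field_simps)
    then show "lv_mult \<alpha> (axis i 1) (axis i 1) = axis i (1::'a)"
      unfolding vec_eq_iff mult_axis sum_axis by (auto simp: axis_comp aii)
  qed
  have a4: "\<And>j. j \<noteq> I4 \<Longrightarrow> \<alpha> I4 j = 1/2"
  proof -
    fix j assume j: "j \<noteq> I4"
    have "lv_mult \<alpha> (axis I4 1) (axis j 1) $ I4 = ((1/2) *s (axis I4 1 + axis j (1::'a))) $ I4"
      using e4[OF j] by simp
    then show "\<alpha> I4 j = 1/2" using j by (simp add: prod axis_comp)
  qed
  have a4': "\<And>j. j \<noteq> I4 \<Longrightarrow> \<alpha> j I4 = 1/2"
  proof -
    fix j assume j: "j \<noteq> I4"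
    have "(1::'a) - 1/2 = 1/2" using char by (simp add: field_simps)
    moreover have "\<alpha> j I4 = 1 - 1/2" using asym a4[OF j] by metis
    ultimately show "\<alpha> j I4 = 1/2" by simp
  qed
  have ane: "\<And>i j. i \<noteq> I4 \<Longrightarrow> j \<noteq> I4 \<Longrightarrow> i \<noteq> j \<Longrightarrow> \<alpha> i j \<noteq> 1/2"
  proof
    fix i j :: idx5 assume i: "i \<noteq> I4" and j: "j \<noteq> I4" and ij: "i \<noteq> j" and h: "\<alpha> i j = 1/2"
    have "(1::'a) - 1/2 = 1/2" using char by (simp add: field_simps)
    moreover have "\<alpha> j i = 1 - 1/2" using asym h by metis
    ultimately have h2: "\<alpha> j i = 1/2" by simp
    have "lv_mult \<alpha> (axis i 1) (axis j 1) = (1/2) *s (axis i 1 + axis j 1)"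
      using ij h h2 by (simp add: prod vec_eq_iff axis_comp)
    then show False using others[OF i j ij] by simp
  qed
  show ?thesis
  proof (intro equalityI subsetI)
    fix D assume "D \<in> {D. is_derivation \<alpha> D}"
    then have add: "\<And>u v. D (u + v) = D u + D v" and sc: "\<And>c u. D (c *s u) = c *s D u"
      and der: "\<And>u v. D (lv_mult \<alpha> u v) = lv_mult \<alpha> (D u) v + lv_mult \<alpha> u (D v)"
      unfolding is_derivation_def by auto
    define X where "X i = D (axis i 1)" for i :: idx5
    have self: "\<And>i k. X i $ k = 2 * (lv_mult \<alpha> (axis i 1) (X i) $ k)"
    proof -
      fix i k :: idx5
      have "X i = lv_mult \<alpha> (X i) (axis i 1) + lv_mult \<alpha> (axis i 1) (X i)"
        using der[of "axis i 1" "axis i 1"] unfolding X_def prod_self .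
      then show "X i $ k = 2 * (lv_mult \<alpha> (axis i 1) (X i) $ k)"
        by (metis mult_comm mult_2 vector_add_component)
    qed
    have pair: "\<And>i j k. i \<noteq> j \<Longrightarrow> \<alpha> i j * X i $ k + \<alpha> j i * X j $ k =
        lv_mult \<alpha> (axis i 1) (X j) $ k + lv_mult \<alpha> (axis j 1) (X i) $ k"
    proof -
      fix i j k :: idx5 assume ij: "i \<noteq> j"
      have "\<alpha> i j *s X i + \<alpha> j i *s X j = lv_mult \<alpha> (X i) (axis j 1) + lv_mult \<alpha> (axis i 1) (X j)"
        using der[of "axis i 1" "axis j 1"] unfolding X_def prod[OF ij] add sc .
      then show "\<alpha> i j * X i $ k + \<alpha> j i * X j $ k =
        lv_mult \<alpha> (axis i 1) (X j) $ k + lv_mult \<alpha> (axis j 1) (X i) $ k"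
        by (metis mult_comm add.commute vector_add_component vector_smult_component)
    qed
    have off: "\<And>j k. j \<noteq> I4 \<Longrightarrow> k \<noteq> I4 \<Longrightarrow> k \<noteq> j \<Longrightarrow> X j $ k = 0"
    proof -
      fix j k :: idx5 assume j: "j \<noteq> I4" and k: "k \<noteq> I4" and kj: "k \<noteq> j"
      have "X j $ k = 2 * (\<alpha> k j * X j $ k)" using self[of j k] kj by (simp add: mult_axis)
      then show "X j $ k = 0" using solve1[OF char ane[OF k j kj]] by blast
    qed
    have diag: "\<And>j. j \<noteq> I4 \<Longrightarrow> X j $ j = - X j $ I4"
    proof -
      fix j assume j: "j \<noteq> I4"
      have s: "(\<Sum>l\<in>UNIV. \<alpha> j l * X j $ l) = \<alpha> j j * X j $ j + \<alpha> j I4 * X j $ I4"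
        by (rule sum_two[OF j]) (metis off j)
      have "X j $ j = 2 * ((1/2) * X j $ j + (1/2) * X j $ I4 + (1/2) * X j $ j)"
        using self[of j j] by (simp add: mult_axis s aii a4'[OF j])
      then have "2 * (X j $ I4 + X j $ j) = 0" using char by (simp add: field_simps)
      then have "X j $ I4 + X j $ j = 0" using char by (simp only: mult_eq_0_iff) simp
      then show "X j $ j = - X j $ I4" by (simp add: eq_neg_iff_add_eq_0 add.commute)
    qed
    have top: "\<And>j. j \<noteq> I4 \<Longrightarrow> X j $ I4 = 0"
    proof -
      fix j assume j: "j \<noteq> I4"
      define i where "i = (if j = I1 then I2 else I1)"
      have i: "i \<noteq> I4" "i \<noteq> j" by (auto simp: i_def)
      have s: "(\<Sum>l\<in>UNIV. \<alpha> i l * X j $ l) = \<alpha> i j * X j $ j + \<alpha> i I4 * X j $ I4"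
        by (rule sum_two[OF j]) (metis off j)
      have "\<alpha> i j * X i $ i + \<alpha> j i * X j $ i =
        lv_mult \<alpha> (axis i 1) (X j) $ i + lv_mult \<alpha> (axis j 1) (X i) $ i"
        by (rule pair) (use i in auto)
      then have "\<alpha> i j * X i $ i = \<alpha> i j * (- X j $ I4) + (1/2) * X j $ I4 + \<alpha> i j * X i $ i"
        using i off[OF j i(1) i(2)] by (simp add: mult_axis s diag[OF j] a4'[OF i(1)])
      then have "(1/2) * X j $ I4 = \<alpha> i j * X j $ I4" by (rule lin)
      then show "X j $ I4 = 0" using solve2[OF char ane[OF i(1) j i(2)]] by blast
    qed
    have Xz: "\<And>j. j \<noteq> I4 \<Longrightarrow> X j = 0"
    proof -
      fix j assume j: "j \<noteq> I4"
      show "X j = 0" unfolding vec_eq_iff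
      proof
        fix k show "X j $ k = 0 $ k"
          using off[OF j, of k] diag[OF j] top[OF j] by (cases "k = j"; cases "k = I4") auto
      qed
    qed
    have X4off: "\<And>k. k \<noteq> I4 \<Longrightarrow> X I4 $ k = 0"
    proof -
      fix k assume k: "k \<noteq> I4"
      define i where "i = (if k = I1 then I2 else I1)"
      have i: "i \<noteq> I4" "i \<noteq> k" by (auto simp: i_def)
      have "\<alpha> i I4 * X i $ k + \<alpha> I4 i * X I4 $ k =
        lv_mult \<alpha> (axis i 1) (X I4) $ k + lv_mult \<alpha> (axis I4 1) (X i) $ k"
        by (rule pair) (use i in auto)
      then have "(1/2) * X I4 $ k = \<alpha> k i * X I4 $ k"
        using i by (simp add: mult_axis Xz[OF i(1)] mult_zero a4[OF i(1)])
      then show "X I4 $ k = 0" using solve2[OF char ane[OF k i(1)]] i(2) by metis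
    qed
    have X4: "X I4 = 0"
    proof -
      have s: "(\<Sum>l\<in>UNIV. \<alpha> I4 l * X I4 $ l) = \<alpha> I4 I1 * X I4 $ I1 + \<alpha> I4 I4 * X I4 $ I4"
        by (rule sum_two) (auto intro: X4off)
      have "X I4 $ I4 = 2 * ((1/2) * X I4 $ I4 + (1/2) * X I4 $ I4)"
        using self[of I4 I4] by (simp add: mult_axis s aii X4off)
      moreover have "(1/2) * X I4 $ I4 + (1/2) * X I4 $ I4 = X I4 $ I4"
        using char by (simp add: field_simps)
      ultimately have "X I4 $ I4 = X I4 $ I4 + X I4 $ I4" by (metis mult_2)
      then have "X I4 $ I4 = 0" by (metis add_cancel_right_right add_cancel_left_right)
      then show ?thesis unfolding vec_eq_iff using X4off by (metis zero_index)
    qed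
    have Xall: "\<And>j. X j = 0" using Xz X4 by metis
    have "D u = 0" for u
    proof -
      have "u = u$I1 *s axis I1 1 + u$I2 *s axis I2 1 + u$I3 *s axis I3 1 + u$I4 *s axis I4 1 + u$I5 *s axis I5 1"
        unfolding vec_eq_iff
      proof
        fix k show "u $ k = (u$I1 *s axis I1 1 + u$I2 *s axis I2 1 + u$I3 *s axis I3 1 + u$I4 *s axis I4 1 + u$I5 *s axis I5 1) $ k"
          by (cases k) (simp_all add: axis_comp)
      qed
      then have "D u = D (u$I1 *s axis I1 1 + u$I2 *s axis I2 1 + u$I3 *s axis I3 1 + u$I4 *s axis I4 1 + u$I5 *s axis I5 1)"
        by simp
      also have "\<dots> = 0" by (simp add: add sc Xall[unfolded X_def])
      finally show ?thesis .
    qed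
    then show "D \<in> {\<lambda>u. 0}" by auto
  next
    fix D assume "D \<in> {\<lambda>u::'a^idx5. 0::'a^idx5}"
    then show "D \<in> {D. is_derivation \<alpha> D}"
      by (simp add: is_derivation_def zero_mult mult_zero)
  qed
qed

end
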